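(* Let $d<\infty$, let $V\subset\mathbb{B}_d$ be an analytic disc attached to the unit sphere and $f$ its embedding map, and suppose $f(-1)=f(1)$. Let $h\in\mathcal{H}_f$ be such that the limits $h(1)=\lim_{r\to1^-}h(r)$ and $h(-1)=\lim_{r\to1^-}h(-r)$ exist. Then $h(1)=h(-1)$.
   Context: $\mathbb{D}$ is the open unit disc, $\mathbb{B}_d$ the open unit ball of $\mathbb{C}^d$. The Drury–Arveson space $H^2_d$ is the RKHS on $\mathbb{B}_d$ with kernel $1/(1-\langle z,w\rangle)$, with multiplier algebra $\mathcal{M}_d$. A variety is a common zero set in $\mathbb{B}_d$ of a family of functions from $\mathcal{M}_d$. An analytic disc attached to the unit sphere is a variety $V\subset\mathbb{B}_d$ ($d<\infty$) for which there is an injective analytic $f:\mathbb{D}\to\mathbb{B}_d$ with $f'(z)\neq0$ on $\mathbb{D}$, $V=f(\mathbb{D})$, $f$ extends to a $C^2$ map on $\overline{\mathbb{D}}$, and for $x\in\overline{\mathbb{D}}$, $\|f(x)\|=1$ iff $|x|=1$ ($f$ is the embedding map). $\mathcal{H}_f$ is the RKHS on $\mathbb{D}$ with kernel $k^f(z,w)=1/(1-\langle f(z),f(w)\rangle)$. *)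

theory Defs
  imports "HOL-Complex_Analysis.Complex_Analysis"
begin

definition lincomb :: "('a \<Rightarrow> 'a \<Rightarrow> complex) \<Rightarrow> (complex \<times> 'a) list \<Rightarrow> 'a \<Rightarrow> complex" where
  "lincomb K cs z = (\<Sum>(a, w)\<leftarrow>cs. a * K z w)"

definition lcnorm2 :: "('a \<Rightarrow> 'a \<Rightarrow> complex) \<Rightarrow> (complex \<times> 'a) list \<Rightarrow> real" where
  "lcnorm2 K cs = Re (\<Sum>(a, w)\<leftarrow>cs. \<Sum>(b, v)\<leftarrow>cs. a * cnj b * K v w)"

definition lcdiff :: "(complex \<times> 'a) list \<Rightarrow> (complex \<times> 'a) list \<Rightarrow> (complex \<times> 'a) list" where
  "lcdiff cs ds = cs @ map (\<lambda>(b, v). (- b, v)) ds"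

definition in_rkhs :: "'a set \<Rightarrow> ('a \<Rightarrow> 'a \<Rightarrow> complex) \<Rightarrow> ('a \<Rightarrow> complex) \<Rightarrow> bool" where
  "in_rkhs X K h \<longleftrightarrow>
     (\<exists>s :: nat \<Rightarrow> (complex \<times> 'a) list.
        (\<forall>n. snd ` set (s n) \<subseteq> X) \<and>
        (\<forall>e>0. \<exists>N. \<forall>m\<ge>N. \<forall>n\<ge>N. lcnorm2 K (lcdiff (s m) (s n)) < e) \<and>
        (\<forall>z\<in>X. (\<lambda>n. lincomb K (s n) z) \<longlonglongrightarrow> h z))"

definition cinner :: "complex ^ 'n \<Rightarrow> complex ^ 'n \<Rightarrow> complex" where
  "cinner z w = (\<Sum>i\<in>UNIV. z $ i * cnj (w $ i))"

definition DA_kernel :: "complex ^ 'n \<Rightarrow> complex ^ 'n \<Rightarrow> complex" where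
  "DA_kernel z w = 1 / (1 - cinner z w)"

definition DA_multiplier :: "(complex ^ 'n \<Rightarrow> complex) \<Rightarrow> bool" where
  "DA_multiplier \<phi> \<longleftrightarrow>
     (\<forall>h. in_rkhs (ball 0 1) DA_kernel h \<longrightarrow> in_rkhs (ball 0 1) DA_kernel (\<lambda>z. \<phi> z * h z))"

definition DA_variety :: "(complex ^ 'n) set \<Rightarrow> bool" where
  "DA_variety V \<longleftrightarrow>
     (\<exists>F. (\<forall>\<phi>\<in>F. DA_multiplier \<phi>) \<and> V = {z \<in> ball 0 1. \<forall>\<phi>\<in>F. \<phi> z = 0})"

definition C1_on :: "complex set \<Rightarrow> (complex \<Rightarrow> 'b::real_normed_vector) \<Rightarrow> bool" where
  "C1_on U g \<longleftrightarrow> (\<exists>D. (\<forall>x\<in>U. (g has_derivative D x) (at x)) \<and>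
                       continuous_on U (\<lambda>x. D x 1) \<and> continuous_on U (\<lambda>x. D x \<i>))"

definition C2_on :: "complex set \<Rightarrow> (complex \<Rightarrow> 'b::real_normed_vector) \<Rightarrow> bool" where
  "C2_on U g \<longleftrightarrow> (\<exists>D. (\<forall>x\<in>U. (g has_derivative D x) (at x)) \<and>
                       C1_on U (\<lambda>x. D x 1) \<and> C1_on U (\<lambda>x. D x \<i>))"

text \<open>f is an embedding map of the analytic disc V attached to the unit sphere.
  f is given on all of the complex plane; only its values on the closed disc matter.
  "f extends to a C^2 map on the closed disc" is rendered as: f agrees on the closed
  disc with a C^2 map on some open neighbourhood of the closed disc.\<close>

definition embedding_map :: "(complex \<Rightarrow> complex ^ 'n) \<Rightarrow> (complex ^ 'n) set \<Rightarrow> bool" where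
  "embedding_map f V \<longleftrightarrow>
     DA_variety V \<and>
     (\<forall>i. (\<lambda>z. f z $ i) holomorphic_on ball 0 1) \<and>
     inj_on f (ball 0 1) \<and>
     (\<forall>z\<in>ball 0 1. \<exists>i. deriv (\<lambda>z. f z $ i) z \<noteq> 0) \<and>
     V = f ` ball 0 1 \<and>
     (\<exists>U g. open U \<and> cball 0 1 \<subseteq> U \<and> C2_on U g \<and> (\<forall>x\<in>cball 0 1. g x = f x)) \<and>
     (\<forall>x\<in>cball 0 1. norm (f x) = 1 \<longleftrightarrow> cmod x = 1)"

definition analytic_disc_attached :: "(complex ^ 'n) set \<Rightarrow> bool" where
  "analytic_disc_attached V \<longleftrightarrow> (\<exists>f. embedding_map f V)"

definition kf :: "(complex \<Rightarrow> complex ^ 'n) \<Rightarrow> complex \<Rightarrow> complex \<Rightarrow> complex" where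
  "kf f z w = 1 / (1 - cinner (f z) (f w))"

end

theory Submission
  imports Defs
begin


lemma cinner_cnj: "cnj (cinner x y) = cinner y x"
  unfolding cinner_def by (simp add: mult.commute)

lemma cinner_add_left: "cinner (x + y) z = cinner x z + cinner y z"
  unfolding cinner_def by (simp add: distrib_right sum.distrib)

lemma cinner_add_right: "cinner z (x + y) = cinner z x + cinner z y"
  unfolding cinner_def by (simp add: distrib_left sum.distrib)

lemma cinner_minus_left: "cinner (- x) z = - cinner x z"
  unfolding cinner_def by (simp add: sum_negf)

lemma cinner_diff_left: "cinner (x - y) z = cinner x z - cinner y z"
  unfolding cinner_def by (simp add: algebra_simps sum_subtractf)

lemma cinner_diff_right: "cinner z (x - y) = cinner z x - cinner z y"
  unfolding cinner_def by (simp add: algebra_simps sum_subtractf)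

lemma cinner_scaleR_left: "cinner (c *\<^sub>R x) z = of_real c * cinner x z"
  unfolding cinner_def by (simp only: vector_scaleR_component) (simp add: sum_distrib_left scaleR_conv_of_real mult.assoc)

lemma cinner_scaleR_right: "cinner z (c *\<^sub>R x) = of_real c * cinner z x"
  unfolding cinner_def by (simp only: vector_scaleR_component) (simp add: sum_distrib_left scaleR_conv_of_real algebra_simps)

lemma norm_sq_vec: "norm (x :: complex ^ 'n) ^ 2 = (\<Sum>i\<in>UNIV. cmod (x $ i) ^ 2)"
  unfolding norm_vec_def L2_set_def by (simp add: sum_nonneg)

lemma cinner_self: "cinner x x = of_real (norm x ^ 2)"
  unfolding cinner_def norm_sq_vec of_real_sum
  by (rule sum.cong) (simp_all add: complex_norm_square[symmetric])

lemma Re_cinner: "Re (cinner x y) = inner x y"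
  unfolding cinner_def inner_vec_def by (simp add: inner_complex_def Re_sum)

lemma cinner_cs: "cmod (cinner x y) \<le> norm x * norm y"
proof -
  have "cmod (cinner x y) \<le> (\<Sum>i\<in>UNIV. cmod (x $ i * cnj (y $ i)))"
    unfolding cinner_def by (rule norm_sum)
  also have "\<dots> = (\<Sum>i\<in>UNIV. \<bar>cmod (x $ i)\<bar> * \<bar>cmod (y $ i)\<bar>)"
    by (simp add: norm_mult)
  also have "\<dots> \<le> L2_set (\<lambda>i. cmod (x $ i)) UNIV * L2_set (\<lambda>i. cmod (y $ i)) UNIV"
    by (rule L2_set_mult_ineq)
  finally show ?thesis by (simp add: norm_vec_def)
qed

lemma cinner_lt1: "norm x < 1 \<Longrightarrow> norm y \<le> 1 \<Longrightarrow> cmod (cinner x y) < 1"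
  by (smt (verit) cinner_cs mult_le_one mult_right_mono norm_ge_zero mult_strict_right_mono mult_less_cancel_left1)

lemma cinner_pow:
  "cinner x y ^ k = (\<Sum>ms\<in>{ms. set ms \<subseteq> UNIV \<and> length ms = k}.
      (\<Prod>j\<leftarrow>ms. x $ j) * cnj (\<Prod>j\<leftarrow>ms. y $ j))"
proof (induction k)
  case 0
  then show ?case by simp
next
  case (Suc k)
  let ?S = "\<lambda>k. {ms. set ms \<subseteq> (UNIV :: 'a set) \<and> length ms = k}"
  have inj: "inj_on (\<lambda>(xs, n). n # xs) (?S k \<times> UNIV)" by (auto simp: inj_on_def)
  have "cinner x y ^ Suc k = cinner x y * cinner x y ^ k" by simp
  also have "\<dots> = cinner x y * (\<Sum>ms\<in>?S k. (\<Prod>j\<leftarrow>ms. x $ j) * cnj (\<Prod>j\<leftarrow>ms. y $ j))"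
    by (simp only: Suc)
  also have "\<dots> = (\<Sum>j\<in>UNIV. \<Sum>ms\<in>?S k. x $ j * cnj (y $ j) * ((\<Prod>j\<leftarrow>ms. x $ j) * cnj (\<Prod>j\<leftarrow>ms. y $ j)))"
    unfolding cinner_def sum_product by (simp add: mult.assoc)
  also have "\<dots> = (\<Sum>(ms, j)\<in>?S k \<times> UNIV. (\<Prod>j\<leftarrow>j#ms. x $ j) * cnj (\<Prod>j\<leftarrow>j#ms. y $ j))"
    by (subst sum.swap) (simp add: sum.cartesian_product algebra_simps)
  also have "\<dots> = (\<Sum>ms\<in>?S (Suc k). (\<Prod>j\<leftarrow>ms. x $ j) * cnj (\<Prod>j\<leftarrow>ms. y $ j))"
    unfolding lists_length_Suc_eq by (subst sum.reindex[OF inj]) (simp add: case_prod_unfold)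
  finally show ?case .
qed



definition lcinner :: "('a \<Rightarrow> 'a \<Rightarrow> complex) \<Rightarrow> (complex \<times> 'a) list \<Rightarrow> (complex \<times> 'a) list \<Rightarrow> complex" where
  "lcinner K cs ds = (\<Sum>(a, w)\<leftarrow>cs. \<Sum>(b, v)\<leftarrow>ds. a * cnj b * K v w)"

lemma lcnorm2_lcinner: "lcnorm2 K cs = Re (lcinner K cs cs)"
  unfolding lcnorm2_def lcinner_def ..

lemma lincomb_lcinner: "lincomb K cs z = lcinner K cs [(1, z)]"
  unfolding lincomb_def lcinner_def by (simp add: case_prod_unfold)

lemma sum_list_idx: "sum_list (map f xs) = (\<Sum>i<length xs. f (xs ! i))"
  by (simp add: sum_list_sum_nth atLeast0LessThan)

lemma lcinner_idx: "lcinner K cs ds = (\<Sum>i<length cs. \<Sum>j<length ds.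
    fst (cs ! i) * cnj (fst (ds ! j)) * K (snd (ds ! j)) (snd (cs ! i)))"
  unfolding lcinner_def sum_list_idx by (simp add: case_prod_unfold)

lemma lcinner_append1: "lcinner K (cs @ cs') ds = lcinner K cs ds + lcinner K cs' ds"
  unfolding lcinner_def by simp

lemma lcinner_append2: "lcinner K cs (ds @ ds') = lcinner K cs ds + lcinner K cs ds'"
  unfolding lcinner_def by (simp add: case_prod_unfold sum_list_addf)

lemma lcinner_scale1: "lcinner K (map (\<lambda>(b, v). (\<mu> * b, v)) cs) ds = \<mu> * lcinner K cs ds"
  unfolding lcinner_idx by (simp add: case_prod_unfold sum_distrib_left mult.assoc)

lemma lcinner_scale2: "lcinner K cs (map (\<lambda>(b, v). (\<mu> * b, v)) ds) = cnj \<mu> * lcinner K cs ds"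
  unfolding lcinner_idx by (simp add: case_prod_unfold sum_distrib_left algebra_simps)

lemma lcinner_herm:
  assumes "\<And>v w. K v w = cnj (K w v)"
  shows "lcinner K ds cs = cnj (lcinner K cs ds)"
  unfolding lcinner_idx
  by (subst sum.swap) (simp add: assms[of "snd (cs ! _)"] mult.commute mult.left_commute)

lemma lcinner_pair: "lcinner K cs [(1, z), (-1, w)] = lincomb K cs z - lincomb K cs w"
  unfolding lcinner_def lincomb_def by (simp add: case_prod_unfold sum_list_subtractf)

lemma lincomb_lcdiff: "lincomb K (lcdiff cs ds) z = lincomb K cs z - lincomb K ds z"
proof -
  have "lcinner K (map (\<lambda>(b, v). (- b, v)) ds) [(1,z)] = - lcinner K ds [(1,z)]"
    using lcinner_scale1[of K "-1" ds "[(1,z)]"] by simp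
  then show ?thesis
    unfolding lincomb_lcinner lcdiff_def lcinner_append1 by simp
qed

lemma psd_idx:
  fixes x :: "nat \<Rightarrow> complex ^ 'n"
  assumes "\<And>i. i < n \<Longrightarrow> norm (x i) < 1"
  shows "0 \<le> Re (\<Sum>i<n. \<Sum>j<n. a i * cnj (a j) * (1 / (1 - cinner (x j) (x i))))"
proof -
  let ?Q = "\<lambda>k. \<Sum>i<n. \<Sum>j<n. a i * cnj (a j) * cinner (x j) (x i) ^ k"
  have "?Q sums (\<Sum>i<n. \<Sum>j<n. a i * cnj (a j) * (1 / (1 - cinner (x j) (x i))))"
  proof (intro sums_sum sums_mult)
    fix i j assume "i \<in> {..<n}" "j \<in> {..<n}"
    then have "cmod (cinner (x j) (x i)) < 1"
      using assms by (intro cinner_lt1) (auto intro: less_imp_le)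
    then show "(\<lambda>k. cinner (x j) (x i) ^ k) sums (1 / (1 - cinner (x j) (x i)))"
      by (rule geometric_sums)
  qed
  then have s: "(\<lambda>k. Re (?Q k)) sums Re (\<Sum>i<n. \<Sum>j<n. a i * cnj (a j) * (1 / (1 - cinner (x j) (x i))))"
    by (rule sums_Re)
  have nn: "0 \<le> Re (?Q k)" for k
  proof -
    let ?S = "{ms. set ms \<subseteq> UNIV \<and> length ms = k}"
    let ?P = "\<lambda>y ms. \<Prod>j\<leftarrow>ms. (y :: complex ^ 'n) $ j"
    let ?Z = "\<lambda>ms. \<Sum>i<n. a i * cnj (?P (x i) ms)"
    have "?Q k = (\<Sum>i<n. \<Sum>j<n. \<Sum>ms\<in>?S. (a i * cnj (?P (x i) ms)) * cnj (a j * cnj (?P (x j) ms)))"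
      unfolding cinner_pow by (simp add: sum_distrib_left algebra_simps)
    also have "\<dots> = (\<Sum>ms\<in>?S. ?Z ms * cnj (?Z ms))"
      by (simp add: sum_product) (subst sum.swap, rule sum.cong, simp, subst sum.swap, simp)
    finally have "Re (?Q k) = (\<Sum>ms\<in>?S. cmod (?Z ms) ^ 2)"
      by (simp add: complex_norm_square[symmetric] Re_sum del: cnj_sum)
    then show ?thesis by (simp add: sum_nonneg)
  qed
  show ?thesis
    by (rule sums_le[OF _ sums_zero s]) (rule nn)
qed



lemma kf_herm: "kf f v w = cnj (kf f w v)"
  unfolding kf_def by (simp add: cinner_cnj)

lemma kf_psd:
  assumes "\<And>z. z \<in> snd ` set cs \<Longrightarrow> norm (f z) < 1"
  shows "0 \<le> lcnorm2 (kf f) cs"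
proof -
  have "0 \<le> Re (\<Sum>i<length cs. \<Sum>j<length cs. fst (cs ! i) * cnj (fst (cs ! j)) *
          (1 / (1 - cinner ((\<lambda>i. f (snd (cs ! i))) j) ((\<lambda>i. f (snd (cs ! i))) i))))"
    by (rule psd_idx) (use assms in auto)
  then show ?thesis
    unfolding lcnorm2_lcinner lcinner_idx kf_def by simp
qed

lemma mult_cnj_sq: "z * cnj z = (of_real (cmod z))^2"
  by (metis complex_norm_square of_real_power)

lemma cs_bound:
  assumes herm: "\<And>v w. K v w = cnj (K w v)"
    and psd: "\<And>\<mu>. 0 \<le> lcnorm2 K (e @ map (\<lambda>(b, v). (\<mu> * b, v)) \<phi>)"
    and Bd: "lcnorm2 K \<phi> \<le> Bd" "0 < Bd"
  shows "cmod (lcinner K e \<phi>) ^ 2 \<le> lcnorm2 K e * Bd"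
proof -
  define B where "B = lcinner K e \<phi>"
  define \<mu> where "\<mu> = - B / of_real Bd"
  define \<psi> where "\<psi> = map (\<lambda>(b, v). (\<mu> * b, v)) \<phi>"
  have h1: "lcinner K \<phi> e = cnj B" unfolding B_def by (rule lcinner_herm[OF herm])
  have "lcinner K (e @ \<psi>) (e @ \<psi>) =
      lcinner K e e + cnj \<mu> * B + \<mu> * cnj B + \<mu> * (cnj \<mu> * lcinner K \<phi> \<phi>)"
    unfolding \<psi>_def lcinner_append1 lcinner_append2 lcinner_scale1 lcinner_scale2 h1 B_def
    by (simp add: algebra_simps)
  moreover have "cnj \<mu> * B = - of_real (cmod B ^ 2 / Bd)"
    unfolding \<mu>_def by (simp add: mult_cnj_sq mult.commute)
  moreover have "\<mu> * cnj B = - of_real (cmod B ^ 2 / Bd)"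
    unfolding \<mu>_def by (simp add: mult_cnj_sq)
  moreover have "\<mu> * (cnj \<mu> * X) = of_real (cmod B ^ 2 / Bd ^ 2) * X" for X
    unfolding \<mu>_def by (simp add: mult_cnj_sq power2_eq_square)
  ultimately have "Re (lcinner K (e @ \<psi>) (e @ \<psi>)) =
      lcnorm2 K e - 2 * (cmod B ^ 2 / Bd) + (cmod B ^ 2 / Bd ^ 2) * lcnorm2 K \<phi>"
    unfolding lcnorm2_lcinner by simp
  moreover have "(cmod B ^ 2 / Bd ^ 2) * lcnorm2 K \<phi> \<le> (cmod B ^ 2 / Bd ^ 2) * Bd"
    using Bd by (intro mult_left_mono) auto
  moreover have "(cmod B ^ 2 / Bd ^ 2) * Bd = cmod B ^ 2 / Bd"
    using Bd by (simp add: power2_eq_square)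
  moreover have "0 \<le> Re (lcinner K (e @ \<psi>) (e @ \<psi>))"
    using psd[of \<mu>] unfolding \<psi>_def lcnorm2_lcinner .
  ultimately have "cmod B ^ 2 / Bd \<le> lcnorm2 K e" by (smt (verit))
  then show ?thesis unfolding B_def using Bd by (simp add: divide_le_eq)
qed



lemma main_abstract:
  fixes f :: "complex \<Rightarrow> complex ^ 'n"
  assumes inball: "\<And>z. z \<in> ball 0 1 \<Longrightarrow> norm (f z) < 1"
    and h: "in_rkhs (ball 0 1) (kf f) h"
    and r: "\<And>k. r k \<in> ball 0 1" and q: "\<And>k. q k \<in> ball 0 1"
    and Bd: "\<And>k. lcnorm2 (kf f) [(1, r k), (-1, q k)] \<le> Bd" "0 < Bd"
    and lim0: "\<And>cs. snd ` set cs \<subseteq> ball 0 1 \<Longrightarrow>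
        (\<lambda>k. lincomb (kf f) cs (r k) - lincomb (kf f) cs (q k)) \<longlonglongrightarrow> 0"
    and hr: "(\<lambda>k. h (r k)) \<longlonglongrightarrow> L1" and hq: "(\<lambda>k. h (q k)) \<longlonglongrightarrow> L2"
  shows "L1 = L2"
proof -
  obtain s where s_in: "\<And>n. snd ` set (s n) \<subseteq> ball 0 1"
    and cauchy: "\<And>e. e > 0 \<Longrightarrow> \<exists>N. \<forall>m\<ge>N. \<forall>n\<ge>N. lcnorm2 (kf f) (lcdiff (s m) (s n)) < e"
    and conv: "\<And>z. z \<in> ball 0 1 \<Longrightarrow> (\<lambda>n. lincomb (kf f) (s n) z) \<longlonglongrightarrow> h z"
    using h unfolding in_rkhs_def by blast
  let ?K = "kf f"
  let ?F = "\<lambda>n k. lincomb ?K (s n) (r k) - lincomb ?K (s n) (q k)"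
  have bound: "cmod (L1 - L2) \<le> sqrt (e * Bd)" if "e > 0" for e
  proof -
    obtain N where N: "\<And>m n. m \<ge> N \<Longrightarrow> n \<ge> N \<Longrightarrow> lcnorm2 ?K (lcdiff (s m) (s n)) < e"
      using cauchy[OF \<open>e > 0\<close>] by blast
    have step1: "cmod (?F n k - ?F N k) \<le> sqrt (e * Bd)" if "n \<ge> N" for n k
    proof -
      let ?e = "lcdiff (s n) (s N)"
      let ?\<phi> = "[(1, r k), (-1, q k)] :: (complex \<times> complex) list"
      have "cmod (lcinner ?K ?e ?\<phi>) ^ 2 \<le> lcnorm2 ?K ?e * Bd"
      proof (rule cs_bound[OF kf_herm])
        fix \<mu>
        show "0 \<le> lcnorm2 ?K (?e @ map (\<lambda>(b, v). (\<mu> * b, v)) ?\<phi>)"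
        proof (rule kf_psd)
          fix z assume "z \<in> snd ` set (?e @ map (\<lambda>(b, v). (\<mu> * b, v)) ?\<phi>)"
          then have "z \<in> snd ` set (s n) \<or> z \<in> snd ` set (s N) \<or> z = r k \<or> z = q k"
            unfolding lcdiff_def by (force simp: image_iff)
          then have "z \<in> ball 0 1" using s_in r q by blast
          then show "norm (f z) < 1" by (rule inball)
        qed
      qed (use Bd in auto)
      also have "\<dots> \<le> e * Bd"
        using N[OF that order.refl] Bd(2) by (intro mult_right_mono) auto
      finally have "cmod (lcinner ?K ?e ?\<phi>) \<le> sqrt (e * Bd)"
        by (simp add: real_le_rsqrt)
      moreover have "lcinner ?K ?e ?\<phi> = ?F n k - ?F N k"
        unfolding lcinner_pair lincomb_lcdiff by simp
      ultimately show ?thesis by simp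
    qed
    have step2: "cmod ((h (r k) - h (q k)) - ?F N k) \<le> sqrt (e * Bd)" for k
    proof (rule LIMSEQ_le_const2)
      show "(\<lambda>n. cmod (?F n k - ?F N k)) \<longlonglongrightarrow> cmod ((h (r k) - h (q k)) - ?F N k)"
        by (intro tendsto_intros conv r q)
      show "\<exists>M. \<forall>n\<ge>M. cmod (?F n k - ?F N k) \<le> sqrt (e * Bd)"
        using step1 by blast
    qed
    show ?thesis
    proof (rule LIMSEQ_le_const2)
      have "(\<lambda>k. (h (r k) - h (q k)) - ?F N k) \<longlonglongrightarrow> (L1 - L2) - 0"
        by (intro tendsto_intros hr hq lim0 s_in)
      then show "(\<lambda>k. cmod ((h (r k) - h (q k)) - ?F N k)) \<longlonglongrightarrow> cmod (L1 - L2)"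
        by (metis (no_types) diff_zero tendsto_norm)
      show "\<exists>M. \<forall>k\<ge>M. cmod ((h (r k) - h (q k)) - ?F N k) \<le> sqrt (e * Bd)"
        using step2 by blast
    qed
  qed
  show ?thesis
  proof (rule ccontr)
    assume "L1 \<noteq> L2"
    then have d: "cmod (L1 - L2) > 0" by simp
    define e where "e = cmod (L1 - L2) ^ 2 / (4 * Bd)"
    have "e > 0" unfolding e_def using d Bd(2) by simp
    have "e * Bd = (cmod (L1 - L2) / 2) ^ 2"
      unfolding e_def using Bd(2) by (simp add: power2_eq_square field_simps)
    then have "sqrt (e * Bd) = cmod (L1 - L2) / 2" by simp
    with bound[OF \<open>e > 0\<close>] d show False by simp
  qed
qed



lemma deriv_real_dir:
  assumes "(g has_derivative Dx) (at (x0 + of_real s))"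
  shows "((\<lambda>\<sigma>. g (x0 + of_real \<sigma>)) has_derivative (\<lambda>h. h *\<^sub>R Dx 1)) (at s within S)"
proof -
  have bl: "bounded_linear Dx" using assms by (rule has_derivative_bounded_linear)
  have "((\<lambda>\<sigma>::real. x0 + of_real \<sigma>) has_derivative (\<lambda>h. of_real h)) (at s within S)"
    by (auto intro!: derivative_eq_intros)
  from has_derivative_compose[OF this has_derivative_at_withinI[OF assms]]
  have "((\<lambda>\<sigma>. g (x0 + of_real \<sigma>)) has_derivative (\<lambda>h. Dx (of_real h))) (at s within S)"
    by (simp add: o_def)
  moreover have "Dx (of_real h) = h *\<^sub>R Dx 1" for h
    using linear_simps(5)[OF bl, of h 1] by (simp add: scaleR_conv_of_real)
  ultimately show ?thesis by simp
qed

lemma taylor1: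
  fixes g :: "complex \<Rightarrow> 'b::real_normed_vector"
  assumes "open U" "x0 \<in> U" "\<And>x. x \<in> U \<Longrightarrow> (g has_derivative D x) (at x)"
    and D1: "((\<lambda>x. D x 1) has_derivative D1) (at x0)"
  shows "\<exists>\<delta>>0. \<exists>M. \<forall>t::real. \<bar>t\<bar> < \<delta> \<longrightarrow> norm (g (x0 + of_real t) - g x0 - t *\<^sub>R D x0 1) \<le> M * t^2"
proof -
  from D1[unfolded has_derivative_at_alt] obtain d1 where bl: "bounded_linear D1" and d1: "d1 > 0"
    and d1': "\<And>y. norm (y - x0) < d1 \<Longrightarrow> norm (D y 1 - D x0 1 - D1 (y - x0)) \<le> 1 * norm (y - x0)"
    by (meson zero_less_one)
  obtain K where K: "K > 0" "\<And>x. norm (D1 x) \<le> norm x * K"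
    using bounded_linear.pos_bounded[OF bl] by blast
  have lip: "norm (D y 1 - D x0 1) \<le> (1 + K) * norm (y - x0)" if "norm (y - x0) < d1" for y
  proof -
    have "norm (D y 1 - D x0 1) \<le> norm (D y 1 - D x0 1 - D1 (y - x0)) + norm (D1 (y - x0))"
      by (metis diff_add_cancel norm_triangle_ineq)
    also have "\<dots> \<le> 1 * norm (y - x0) + norm (y - x0) * K"
      using d1'[OF that] K(2) by (intro add_mono) auto
    finally show ?thesis by (simp add: algebra_simps)
  qed
  obtain e0 where e0: "e0 > 0" "ball x0 e0 \<subseteq> U" using assms(1,2) open_contains_ball by blast
  define \<delta> where "\<delta> = min d1 e0"
  have "\<delta> > 0" using d1 e0 by (simp add: \<delta>_def)
  moreover have "norm (g (x0 + of_real t) - g x0 - t *\<^sub>R D x0 1) \<le> (1 + K) * t^2" if t: "\<bar>t\<bar> < \<delta>" for t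
  proof -
    let ?S = "cball (0::real) \<bar>t\<bar>"
    have inS: "x0 + of_real \<sigma> \<in> U" "norm ((x0 + of_real \<sigma>) - x0) < d1" if "\<sigma> \<in> ?S" for \<sigma>
    proof -
      have "\<bar>\<sigma>\<bar> < \<delta>" using that t by auto
      then show "x0 + of_real \<sigma> \<in> U" "norm ((x0 + of_real \<sigma>) - x0) < d1"
        using e0(2) by (auto simp: \<delta>_def dist_norm)
    qed
    have "norm ((\<lambda>\<sigma>. g (x0 + of_real \<sigma>)) t - (\<lambda>\<sigma>. g (x0 + of_real \<sigma>)) 0 - (\<lambda>h. h *\<^sub>R D (x0 + of_real 0) 1) (t - 0))
          \<le> norm (t - 0) * ((1 + K) * \<bar>t\<bar>)"
    proof (rule differentiable_bound_linearization[where S = ?S])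
      fix \<tau> :: real assume "\<tau> \<in> {0..1}"
      then show "0 + \<tau> *\<^sub>R (t - 0) \<in> ?S" by (auto simp: abs_mult intro!: mult_left_le_one_le)
    next
      fix \<sigma> assume "\<sigma> \<in> ?S"
      then show "((\<lambda>\<sigma>. g (x0 + of_real \<sigma>)) has_derivative (\<lambda>h. h *\<^sub>R D (x0 + of_real \<sigma>) 1)) (at \<sigma> within ?S)"
        using inS assms(3) by (intro deriv_real_dir) auto
    next
      fix \<sigma> assume s: "\<sigma> \<in> ?S"
      have "onorm ((\<lambda>h. h *\<^sub>R D (x0 + of_real \<sigma>) 1) - (\<lambda>h. h *\<^sub>R D (x0 + of_real 0) 1))
          = onorm (\<lambda>h::real. h *\<^sub>R (D (x0 + of_real \<sigma>) 1 - D x0 1))"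
        by (simp add: fun_diff_def scaleR_diff_right)
      also have "\<dots> = norm (D (x0 + of_real \<sigma>) 1 - D x0 1)"
        using onorm_scaleR_left[OF bounded_linear_ident] by (simp add: onorm_id)
      also have "\<dots> \<le> (1 + K) * norm ((x0 + of_real \<sigma>) - x0)"
        using inS[OF s] by (intro lip) auto
      also have "\<dots> \<le> (1 + K) * \<bar>t\<bar>"
        using s K by (intro mult_left_mono) auto
      finally show "onorm ((\<lambda>h. h *\<^sub>R D (x0 + of_real \<sigma>) 1) - (\<lambda>h. h *\<^sub>R D (x0 + of_real 0) 1)) \<le> (1 + K) * \<bar>t\<bar>" .
    qed (auto)
    then show ?thesis by (simp add: power2_eq_square abs_mult algebra_simps)
  qed
  ultimately show ?thesis by blast
qed



lemma dir_i_ball: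
  fixes g f :: "complex \<Rightarrow> complex ^ 'n" and Dx :: "complex \<Rightarrow> complex ^ 'n"
  assumes "(g has_derivative Dx) (at x)" "(\<lambda>z. f z $ j) holomorphic_on S" "open S" "x \<in> S"
    "\<And>z. z \<in> S \<Longrightarrow> g z = f z"
  shows "Dx \<i> $ j = \<i> * Dx 1 $ j"
proof -
  have a: "((\<lambda>z. g z $ j) has_derivative (\<lambda>h. Dx h $ j)) (at x)"
    using bounded_linear.has_derivative[OF bounded_linear_vec_nth assms(1)] .
  have "((\<lambda>z. f z $ j) has_field_derivative deriv (\<lambda>z. f z $ j) x) (at x)"
    using assms(2,3,4) by (rule holomorphic_derivI)
  then have "((\<lambda>z. f z $ j) has_derivative (\<lambda>h. deriv (\<lambda>z. f z $ j) x * h)) (at x)"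
    by (simp add: has_field_derivative_def)
  then have b: "((\<lambda>z. g z $ j) has_derivative (\<lambda>h. deriv (\<lambda>z. f z $ j) x * h)) (at x)"
    by (rule has_derivative_transform_within_open[OF _ assms(3,4)]) (simp add: assms(5))
  from has_derivative_unique[OF a b] have "\<And>h. Dx h $ j = deriv (\<lambda>z. f z $ j) x * h"
    by metis
  then show ?thesis by (simp add: mult.commute)
qed

lemma dir_i:
  fixes g f :: "complex \<Rightarrow> complex ^ 'n" and D :: "complex \<Rightarrow> complex \<Rightarrow> complex ^ 'n"
  assumes U: "open U" "cball 0 1 \<subseteq> U" and gD: "\<And>x. x \<in> U \<Longrightarrow> (g has_derivative D x) (at x)"
    and c1: "continuous_on U (\<lambda>x. D x 1)" and ci: "continuous_on U (\<lambda>x. D x \<i>)"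
    and hol: "\<And>j. (\<lambda>z. f z $ j) holomorphic_on ball 0 1"
    and gf: "\<And>x. x \<in> cball 0 1 \<Longrightarrow> g x = f x" and x0: "x0 \<in> cball 0 1"
  shows "D x0 \<i> $ j = \<i> * D x0 1 $ j"
proof -
  have "(\<lambda>x. D x \<i> $ j - \<i> * D x 1 $ j) x0 = 0"
  proof (rule continuous_constant_on_closure[where S = "ball 0 1" and f = "\<lambda>x. D x \<i> $ j - \<i> * D x 1 $ j"])
    have "continuous_on U (\<lambda>x. D x \<i> $ j - \<i> * D x 1 $ j)"
      by (intro continuous_intros c1 ci)
    then show "continuous_on (closure (ball 0 1)) (\<lambda>x. D x \<i> $ j - \<i> * D x 1 $ j)"
      using U(2) by (simp add: continuous_on_subset)
  next
    fix x :: complex assume x: "x \<in> ball 0 1"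
    have "D x \<i> $ j = \<i> * D x 1 $ j"
      by (rule dir_i_ball[OF gD hol[of j] open_ball x]) (use x U gf in auto)
    then show "D x \<i> $ j - \<i> * D x 1 $ j = 0" by simp
  next
    show "x0 \<in> closure (ball 0 1)" using x0 by simp
  qed
  then show ?thesis by simp
qed

lemma circle_tangent:
  fixes g :: "complex \<Rightarrow> complex ^ 'n"
  assumes gD: "(g has_derivative Dx) (at x0)"
    and circ: "\<And>\<theta>. norm (g (x0 * cis \<theta>)) = 1"
  shows "inner (Dx (x0 * \<i>)) (g x0) = 0"
proof -
  have bl: "bounded_linear Dx" using gD by (rule has_derivative_bounded_linear)
  have c: "((\<lambda>\<theta>. x0 * cis \<theta>) has_derivative (\<lambda>h. h *\<^sub>R (x0 * \<i>))) (at 0)"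
  proof -
    have "((\<lambda>\<theta>. x0 * cis \<theta>) has_derivative (\<lambda>h. x0 * (h *\<^sub>R (\<i> * cis 0)))) (at 0)"
      by (intro has_derivative_mult_right has_derivative_cis has_derivative_ident)
    then show ?thesis by (simp add: scaleR_conv_of_real mult.commute mult.left_commute)
  qed
  have gc: "((\<lambda>\<theta>. g (x0 * cis \<theta>)) has_derivative (\<lambda>h. Dx (h *\<^sub>R (x0 * \<i>)))) (at 0)"
    using has_derivative_compose[OF c, of g Dx] gD by (simp add: o_def)
  have "((\<lambda>\<theta>. inner (g (x0 * cis \<theta>)) (g (x0 * cis \<theta>))) has_derivative
      (\<lambda>h. inner (g (x0 * cis 0)) (Dx (h *\<^sub>R (x0 * \<i>))) + inner (Dx (h *\<^sub>R (x0 * \<i>))) (g (x0 * cis 0)))) (at 0)"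
    by (rule has_derivative_inner[OF gc gc])
  moreover have "(\<lambda>\<theta>. inner (g (x0 * cis \<theta>)) (g (x0 * cis \<theta>))) = (\<lambda>\<theta>. 1)"
    using circ by (simp add: power2_norm_eq_inner[symmetric])
  ultimately have "((\<lambda>\<theta>::real. 1::real) has_derivative
      (\<lambda>h. inner (g x0) (Dx (h *\<^sub>R (x0 * \<i>))) + inner (Dx (h *\<^sub>R (x0 * \<i>))) (g x0))) (at 0)"
    by simp
  from has_derivative_unique[OF this has_derivative_const]
  have "\<And>h. inner (g x0) (Dx (h *\<^sub>R (x0 * \<i>))) + inner (Dx (h *\<^sub>R (x0 * \<i>))) (g x0) = 0"
    by metis
  from this[of 1] show ?thesis by (simp add: inner_commute)
qed



lemma moeb_id: "cmod (1 - cnj a * w) ^ 2 - cmod (w - a) ^ 2 = (1 - cmod a ^ 2) * (1 - cmod w ^ 2)"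
  unfolding cmod_power2 by (simp add: power2_eq_square algebra_simps)

lemma schwarz_pick_bound:
  fixes \<phi> :: "complex \<Rightarrow> complex"
  assumes hol: "\<phi> holomorphic_on ball 0 1" and lt1: "\<And>z. norm z < 1 \<Longrightarrow> norm (\<phi> z) < 1"
    and z: "norm z < 1"
  shows "(1 - norm z) * ((1 - norm (\<phi> 0)) / (1 + norm (\<phi> 0))) \<le> 1 - norm (\<phi> z) ^ 2"
proof -
  define a where "a = \<phi> 0"
  have a1: "cmod a < 1" unfolding a_def using lt1[of 0] by simp
  have den: "1 - cnj a * \<phi> w \<noteq> 0" if "norm w < 1" for w
  proof
    assume "1 - cnj a * \<phi> w = 0"
    then have "cmod (cnj a * \<phi> w) = 1" by (metis eq_iff_diff_eq_0 norm_one)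
    moreover have "cmod (cnj a * \<phi> w) < 1"
    proof -
      have "cmod a * cmod (\<phi> w) \<le> cmod (\<phi> w)"
        using a1 by (intro mult_left_le_one_le) auto
      then show ?thesis using lt1[OF that] by (simp add: norm_mult)
    qed
    ultimately show False by simp
  qed
  define \<psi> where "\<psi> w = (\<phi> w - a) / (1 - cnj a * \<phi> w)" for w
  have hol\<psi>: "\<psi> holomorphic_on ball 0 1"
    unfolding \<psi>_def using den by (intro holomorphic_intros hol) auto
  have lt: "cmod (\<phi> w - a) < cmod (1 - cnj a * \<phi> w)" if "norm w < 1" for w
  proof -
    have "0 < (1 - cmod a ^ 2) * (1 - cmod (\<phi> w) ^ 2)"
      using a1 lt1[OF that] by (intro mult_pos_pos) (auto simp: power_less_one_iff abs_square_less_1)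
    then have "cmod (\<phi> w - a) ^ 2 < cmod (1 - cnj a * \<phi> w) ^ 2" using moeb_id[of a "\<phi> w"] by linarith
    then show ?thesis by (simp add: power_less_imp_less_base)
  qed
  have \<psi>lt: "norm (\<psi> w) < 1" if "norm w < 1" for w
    unfolding \<psi>_def using lt[OF that] den[OF that] by (simp add: norm_divide divide_less_eq)
  have "\<psi> 0 = 0" unfolding \<psi>_def a_def by simp
  from Schwarz_Lemma(1)[OF hol\<psi> this \<psi>lt z]
  have P: "cmod (\<psi> z) \<le> cmod z" .
  define A where "A = cmod a"
  define W where "W = cmod (\<phi> z)"
  define Dn where "Dn = cmod (1 - cnj a * \<phi> z)"
  define Nm where "Nm = cmod (\<phi> z - a)"
  define Z where "Z = cmod z"
  have id: "Dn^2 - Nm^2 = (1 - A^2) * (1 - W^2)" unfolding Dn_def Nm_def A_def W_def by (rule moeb_id)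
  have Dpos: "Dn > 0" unfolding Dn_def using den[OF z] by simp
  have NmZ: "Nm \<le> Z * Dn" using P Dpos unfolding \<psi>_def Nm_def Dn_def Z_def by (simp add: norm_divide divide_le_eq)
  have DnA: "Dn \<ge> 1 - A"
  proof -
    have "cmod (cnj a * \<phi> z) \<le> A" unfolding A_def using lt1[OF z]
      by (simp add: norm_mult mult_right_le_one_le)
    moreover have "1 - cmod (cnj a * \<phi> z) \<le> cmod (1 - cnj a * \<phi> z)"
      by (metis norm_one norm_triangle_ineq2)
    ultimately show ?thesis unfolding Dn_def by linarith
  qed
  have A: "0 \<le> A" "A < 1" using a1 by (auto simp: A_def)
  have Z: "0 \<le> Z" "Z < 1" using z by (auto simp: Z_def)
  have "Nm^2 \<le> Z^2 * Dn^2"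
    using NmZ by (metis Nm_def norm_ge_zero power_mono power_mult_distrib)
  then have "(1 - Z^2) * Dn^2 \<le> (1 - A^2) * (1 - W^2)" using id by (simp add: algebra_simps)
  moreover have "(1 - Z^2) * (1 - A)^2 \<le> (1 - Z^2) * Dn^2"
    using DnA A Z by (intro mult_left_mono power_mono) (auto simp: power_le_one abs_square_le_1)
  ultimately have "(1 - Z^2) * (1 - A)^2 \<le> (1 - A^2) * (1 - W^2)" by linarith
  then have "((1 - Z^2) * (1 - A)) * (1 - A) \<le> ((1 + A) * (1 - W^2)) * (1 - A)"
    by (simp add: power2_eq_square algebra_simps)
  then have "(1 - Z^2) * (1 - A) \<le> (1 + A) * (1 - W^2)"
    using A by (simp add: mult_le_cancel_right)
  moreover have "(1 - Z) * (1 - A) \<le> (1 - Z^2) * (1 - A)"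
    using A Z by (intro mult_right_mono) (auto simp: power2_eq_square intro: mult_left_le_one_le)
  ultimately have "(1 - Z) * (1 - A) \<le> (1 + A) * (1 - W^2)" by linarith
  then have "((1 - Z) * (1 - A)) / (1 + A) \<le> 1 - W^2"
    using A by (simp add: divide_le_eq mult.commute)
  then show ?thesis
    unfolding A_def[symmetric] a_def[symmetric] W_def[symmetric] Z_def[symmetric] by simp
qed



lemma est:
  fixes p a b a1 b1 ea eb :: "complex ^ 'n"
  assumes p: "norm p = 1" and b: "norm b \<le> 1" and a_eq: "a = p + a1 + ea" and b_eq: "b = p + b1 + eb"
  shows "cmod (1 - cinner a b + cinner a1 p + cinner p b1)
    \<le> norm a1 * norm b1 + norm ea * norm b + (1 + norm a1) * norm eb"
proof -
  have pp: "cinner p p = 1" using p by (simp add: cinner_self)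
  have "cinner a b = cinner (p + a1) b + cinner ea b" unfolding a_eq by (simp add: cinner_add_left)
  also have "cinner (p + a1) b = cinner (p + a1) (p + b1) + cinner (p + a1) eb"
    unfolding b_eq by (simp add: cinner_add_right)
  also have "cinner (p + a1) (p + b1) = cinner p p + cinner p b1 + cinner a1 p + cinner a1 b1"
    by (simp add: cinner_add_right cinner_add_left)
  finally have eq: "1 - cinner a b + cinner a1 p + cinner p b1 = - (cinner a1 b1 + cinner (p + a1) eb + cinner ea b)"
    using pp by simp
  have "cmod (1 - cinner a b + cinner a1 p + cinner p b1) \<le> cmod (cinner a1 b1) + cmod (cinner (p + a1) eb) + cmod (cinner ea b)"
    unfolding eq norm_minus_cancel
    using norm_triangle_ineq[of "cinner a1 b1 + cinner (p + a1) eb" "cinner ea b"]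
      norm_triangle_ineq[of "cinner a1 b1" "cinner (p + a1) eb"]
    by linarith
  also have "\<dots> \<le> norm a1 * norm b1 + (1 + norm a1) * norm eb + norm ea * norm b"
  proof (intro add_mono cinner_cs)
    have "cmod (cinner (p + a1) eb) \<le> norm (p + a1) * norm eb" by (rule cinner_cs)
    also have "\<dots> \<le> (1 + norm a1) * norm eb"
      using p by (intro mult_right_mono) (auto intro: order_trans[OF norm_triangle_ineq])
    finally show "cmod (cinner (p + a1) eb) \<le> (1 + norm a1) * norm eb" .
  qed
  finally show ?thesis by simp
qed

lemma recip_close:
  fixes X :: complex
  assumes "cmod (X - of_real (2 * l)) \<le> E" "E \<le> l" "l > 0"
  shows "cmod (1 / X - 1 / of_real (2 * l)) \<le> E / (2 * l ^ 2)"
proof -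
  have "cmod X \<ge> 2 * l - E"
  proof -
    have "norm (of_real (2 * l) :: complex) - cmod X \<le> cmod (of_real (2 * l) - X)"
      by (rule norm_triangle_ineq2)
    moreover have "norm (of_real (2 * l) :: complex) = 2 * l" using assms(3) by simp
    moreover have "cmod (of_real (2 * l) - X) = cmod (X - of_real (2 * l))" by (rule norm_minus_commute)
    ultimately show ?thesis using assms(1) by linarith
  qed
  then have X: "cmod X \<ge> l" using assms by linarith
  then have X0: "X \<noteq> 0" using assms(3) by auto
  have "1 / X - 1 / of_real (2 * l) = (of_real (2 * l) - X) / (X * of_real (2 * l))"
    using X0 assms(3) by (simp add: field_simps)
  then have "cmod (1 / X - 1 / of_real (2 * l)) = cmod (X - of_real (2 * l)) / (cmod X * (2 * l))"
    using assms(3) by (simp add: norm_divide norm_mult norm_minus_commute)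
  also have "\<dots> \<le> E / (l * (2 * l))"
    using assms X by (intro frac_le mult_mono) (auto intro: order_trans[OF norm_ge_zero])
  finally show ?thesis by (simp add: power2_eq_square mult.commute mult.left_commute)
qed



lemma est2:
  fixes p a b a1 b1 ea eb :: "complex ^ 'n"
  assumes p: "norm p = 1" and b: "norm b \<le> 1" and a_eq: "a = p + a1 + ea" and b_eq: "b = p + b1 + eb"
    and a1: "norm a1 \<le> s * R" and b1: "norm b1 \<le> s * R"
    and ea: "norm ea \<le> M * s^2" and eb: "norm eb \<le> M * s^2"
    and s: "0 \<le> s" "s \<le> 1" and R: "R \<ge> 1" and M: "M \<ge> 0"
  shows "cmod (1 - cinner a b + cinner a1 p + cinner p b1) \<le> s^2 * (R^2 + 3 * R * M)"
proof -
  have "cmod (1 - cinner a b + cinner a1 p + cinner p b1)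
    \<le> norm a1 * norm b1 + norm ea * norm b + (1 + norm a1) * norm eb"
    by (rule est[OF p b a_eq b_eq])
  also have "norm a1 * norm b1 \<le> (s * R) * (s * R)"
    using a1 b1 s R by (intro mult_mono) auto
  also have "norm ea * norm b \<le> (M * s^2) * 1"
    using ea b M by (intro mult_mono) auto
  also have "(1 + norm a1) * norm eb \<le> (2 * R) * (M * s^2)"
  proof (intro mult_mono)
    have "s * R \<le> 1 * R" using s R by (intro mult_right_mono) auto
    then show "1 + norm a1 \<le> 2 * R" using a1 R by linarith
  qed (use eb M s R in auto)
  finally have "cmod (1 - cinner a b + cinner a1 p + cinner p b1) \<le> s^2 * R^2 + M * s^2 + 2 * R * M * s^2"
    by (simp add: power2_eq_square algebra_simps)
  also have "M * s^2 \<le> R * M * s^2"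
  proof -
    have "1 * (M * s^2) \<le> R * (M * s^2)" using R M by (intro mult_right_mono) auto
    then show ?thesis by (simp add: mult.assoc)
  qed
  finally show ?thesis by (simp add: algebra_simps)
qed

lemma N_bound:
  fixes p u v a b ea eb :: "complex ^ 'n"
  assumes p: "norm p = 1" and Iu: "Im (cinner u p) = 0" and Iv: "Im (cinner v p) = 0"
    and al: "\<alpha> = Re (cinner u p)" "\<alpha> > 0" and be: "\<beta> = - Re (cinner v p)" "\<beta> > 0"
    and M: "M \<ge> 0"
    and t: "0 < t" and tau: "\<tau> = \<alpha> * t / \<beta>"
    and s: "(1 + \<alpha> / \<beta>) * t \<le> 1"
    and a_eq: "a = p - t *\<^sub>R u + ea" and b_eq: "b = p + \<tau> *\<^sub>R v + eb"
    and ea: "norm ea \<le> M * t^2" and eb: "norm eb \<le> M * \<tau>^2"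
    and na: "norm a \<le> 1" and nb: "norm b \<le> 1"
    and small: "((1 + \<alpha> / \<beta>) * t)^2 * ((1 + norm u + norm v)^2 + 3 * (1 + norm u + norm v) * M) \<le> \<alpha> * t"
  shows "Re (1 / (1 - cinner a a) - 1 / (1 - cinner b a) - 1 / (1 - cinner a b) + 1 / (1 - cinner b b))
    \<le> 2 * ((1 + \<alpha> / \<beta>)^2 * ((1 + norm u + norm v)^2 + 3 * (1 + norm u + norm v) * M)) / \<alpha>^2"
proof -
  define c where "c = \<alpha> / \<beta>"
  define R where "R = 1 + norm u + norm v"
  define s where "s = (1 + c) * t"
  define K where "K = R^2 + 3 * R * M"
  define l where "l = \<alpha> * t"
  define Y where "Y = (of_real (2 * l) :: complex)"
  have c0: "c > 0" unfolding c_def using al(2) be(2) by (rule divide_pos_pos)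
  have l0: "l > 0" unfolding l_def using al t by simp
  have tau': "\<tau> = c * t" unfolding tau c_def by simp
  have taubeta: "\<tau> * \<beta> = l" unfolding tau l_def using be by simp
  have R1: "R \<ge> 1" unfolding R_def by simp
  have s01: "0 \<le> s" "s \<le> 1" using s t c0 unfolding s_def c_def by auto
  have ts: "t \<le> s" "\<tau> \<le> s" "0 \<le> \<tau>" using t c0 unfolding s_def tau' by (auto simp: algebra_simps)
  have nu: "norm ((- t) *\<^sub>R u) \<le> s * R"
  proof -
    have "norm ((- t) *\<^sub>R u) = t * norm u" using t by simp
    also have "\<dots> \<le> s * R" using ts t unfolding R_def by (intro mult_mono) auto
    finally show ?thesis .
  qed
  have nv: "norm (\<tau> *\<^sub>R v) \<le> s * R"
  proof -
    have "norm (\<tau> *\<^sub>R v) = \<tau> * norm v" using ts by simp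
    also have "\<dots> \<le> s * R" using ts unfolding R_def by (intro mult_mono) auto
    finally show ?thesis .
  qed
  have ea': "norm ea \<le> M * s^2" using ea ts t M by (smt (verit) mult_left_mono power_mono)
  have eb': "norm eb \<le> M * \<tau>^2" using eb .
  then have eb': "norm eb \<le> M * s^2" using ts M by (smt (verit) mult_left_mono power_mono)
  have a_eq': "a = p + (- t) *\<^sub>R u + ea" using a_eq by simp
  have cu: "cinner u p = of_real \<alpha>" using Iu al by (simp add: complex_eq_iff)
  have cpu: "cinner p u = of_real \<alpha>" using cu cinner_cnj[of u p] by simp
  have cv: "cinner v p = - of_real \<beta>" using Iv be by (simp add: complex_eq_iff)
  have cpv: "cinner p v = - of_real \<beta>" using cv cinner_cnj[of v p] by simp
  have tl: "of_real t * of_real \<alpha> = (of_real l :: complex)" unfolding l_def by (simp add: mult.commute)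
  have taul: "of_real \<tau> * of_real \<beta> = (of_real l :: complex)" using taubeta by (metis of_real_mult)
  have small': "s^2 * K \<le> l" using small unfolding s_def K_def R_def l_def c_def by simp
  have eA: "cmod ((1 - cinner a a) - Y) \<le> s^2 * K"
  proof -
    have bd: "cmod (1 - cinner a a + cinner ((- t) *\<^sub>R u) p + cinner p ((- t) *\<^sub>R u)) \<le> s^2 * K"
      unfolding K_def by (rule est2[OF p na a_eq' a_eq' nu nu ea' ea' s01 R1 M])
    have eq: "1 - cinner a a + cinner ((- t) *\<^sub>R u) p + cinner p ((- t) *\<^sub>R u) = (1 - cinner a a) - Y"
      unfolding Y_def cinner_scaleR_left cinner_scaleR_right cu cpu using tl by simp
    show ?thesis using bd unfolding eq .
  qed
  have eB: "cmod ((1 - cinner b b) - Y) \<le> s^2 * K"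
  proof -
    have bd: "cmod (1 - cinner b b + cinner (\<tau> *\<^sub>R v) p + cinner p (\<tau> *\<^sub>R v)) \<le> s^2 * K"
      unfolding K_def by (rule est2[OF p nb b_eq b_eq nv nv eb' eb' s01 R1 M])
    have eq: "1 - cinner b b + cinner (\<tau> *\<^sub>R v) p + cinner p (\<tau> *\<^sub>R v) = (1 - cinner b b) - Y"
      unfolding Y_def cinner_scaleR_left cinner_scaleR_right cv cpv using taul by simp
    show ?thesis using bd unfolding eq .
  qed
  have eC: "cmod ((1 - cinner a b) - Y) \<le> s^2 * K"
  proof -
    have bd: "cmod (1 - cinner a b + cinner ((- t) *\<^sub>R u) p + cinner p (\<tau> *\<^sub>R v)) \<le> s^2 * K"
      unfolding K_def by (rule est2[OF p nb a_eq' b_eq nu nv ea' eb' s01 R1 M])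
    have eq: "1 - cinner a b + cinner ((- t) *\<^sub>R u) p + cinner p (\<tau> *\<^sub>R v) = (1 - cinner a b) - Y"
      unfolding Y_def cinner_scaleR_left cinner_scaleR_right cu cpv using tl taul by simp
    show ?thesis using bd unfolding eq .
  qed
  have eC': "cmod ((1 - cinner b a) - Y) \<le> s^2 * K"
  proof -
    have bd: "cmod (1 - cinner b a + cinner (\<tau> *\<^sub>R v) p + cinner p ((- t) *\<^sub>R u)) \<le> s^2 * K"
      unfolding K_def by (rule est2[OF p na b_eq a_eq' nv nu eb' ea' s01 R1 M])
    have eq: "1 - cinner b a + cinner (\<tau> *\<^sub>R v) p + cinner p ((- t) *\<^sub>R u) = (1 - cinner b a) - Y"
      unfolding Y_def cinner_scaleR_left cinner_scaleR_right cv cpu using tl taul by simp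
    show ?thesis using bd unfolding eq .
  qed
  define E where "E = s^2 * K / (2 * l^2)"
  have rA: "cmod (1 / (1 - cinner a a) - 1 / Y) \<le> E"
    unfolding E_def Y_def by (rule recip_close[OF eA[unfolded Y_def] small' l0])
  have rB: "cmod (1 / (1 - cinner b b) - 1 / Y) \<le> E"
    unfolding E_def Y_def by (rule recip_close[OF eB[unfolded Y_def] small' l0])
  have rC: "cmod (1 / (1 - cinner a b) - 1 / Y) \<le> E"
    unfolding E_def Y_def by (rule recip_close[OF eC[unfolded Y_def] small' l0])
  have rC': "cmod (1 / (1 - cinner b a) - 1 / Y) \<le> E"
    unfolding E_def Y_def by (rule recip_close[OF eC'[unfolded Y_def] small' l0])
  have "1 / (1 - cinner a a) - 1 / (1 - cinner b a) - 1 / (1 - cinner a b) + 1 / (1 - cinner b b)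
     = (1 / (1 - cinner a a) - 1 / Y) - (1 / (1 - cinner b a) - 1 / Y) - (1 / (1 - cinner a b) - 1 / Y)
       + (1 / (1 - cinner b b) - 1 / Y)" by simp
  then have "Re (1 / (1 - cinner a a) - 1 / (1 - cinner b a) - 1 / (1 - cinner a b) + 1 / (1 - cinner b b))
     \<le> cmod (1 / (1 - cinner a a) - 1 / Y) + cmod (1 / (1 - cinner b a) - 1 / Y)
       + cmod (1 / (1 - cinner a b) - 1 / Y) + cmod (1 / (1 - cinner b b) - 1 / Y)"
    by (smt (verit) complex_Re_le_cmod minus_complex.simps(1) plus_complex.simps(1) abs_Re_le_cmod)
  also have "\<dots> \<le> 4 * E" using rA rB rC rC' by simp
  also have "4 * E = 2 * ((1 + c)^2 * K) / \<alpha>^2"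
    unfolding E_def s_def l_def using al t by (simp add: field_simps power2_eq_square)
  finally show ?thesis unfolding c_def K_def R_def .
qed



lemma pos_from_SP:
  fixes \<alpha> c0 M \<delta> :: real
  assumes "\<And>t. 0 < t \<Longrightarrow> t < \<delta> \<Longrightarrow> t * c0 \<le> 2 * (t * \<alpha> + M * t^2)"
    and "c0 > 0" "\<delta> > 0" "M \<ge> 0"
  shows "\<alpha> > 0"
proof -
  define t where "t = min (\<delta> / 2) (c0 / (4 * (M + 1)))"
  have t0: "t > 0" "t < \<delta>" using assms unfolding t_def by auto
  have "t * c0 \<le> 2 * (t * \<alpha> + M * t^2)" by (rule assms(1)[OF t0])
  then have "t * c0 \<le> t * (2 * \<alpha> + 2 * M * t)" by (simp add: power2_eq_square algebra_simps)
  then have "c0 \<le> 2 * \<alpha> + 2 * M * t" using t0 by (simp add: mult_le_cancel_left_pos)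
  moreover have "M * t \<le> M * (c0 / (4 * (M + 1)))" using assms unfolding t_def by (intro mult_left_mono) auto
  moreover have "M * (c0 / (4 * (M + 1))) < c0 / 4"
    using assms by (simp add: field_simps)
  ultimately show ?thesis using assms by linarith
qed

lemma one_minus_sq_le: "cmod w \<le> 1 \<Longrightarrow> 1 - cmod w ^ 2 \<le> 2 * (1 - Re w)"
proof -
  assume w: "cmod w \<le> 1"
  have a: "Re w \<le> cmod w" by (rule complex_Re_le_cmod)
  have b: "(1 - cmod w) * (1 + cmod w) \<le> (1 - cmod w) * 2" using w by (intro mult_left_mono) auto
  have "1 - cmod w ^ 2 = (1 - cmod w) * (1 + cmod w)" by (simp add: power2_eq_square algebra_simps)
  also have "\<dots> \<le> 2 - 2 * cmod w" using b by simp
  also have "\<dots> \<le> 2 * (1 - Re w)" using a by simp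
  finally show ?thesis .
qed

lemma tendsto_sum_list:
  assumes "\<And>x. x \<in> set xs \<Longrightarrow> ((\<lambda>k. F k x) \<longlongrightarrow> G x) L"
  shows "((\<lambda>k. \<Sum>x\<leftarrow>xs. F k x) \<longlongrightarrow> (\<Sum>x\<leftarrow>xs. G x :: 'b :: topological_monoid_add)) L"
  using assms by (induction xs) (auto intro!: tendsto_add)

lemma tendsto_cinner_left:
  "(X \<longlongrightarrow> x) L \<Longrightarrow> ((\<lambda>k. cinner (X k) y) \<longlongrightarrow> cinner x y) L"
  unfolding cinner_def by (intro tendsto_intros)

lemma im_zero:
  fixes w u p :: "complex ^ 'n"
  assumes "\<And>j. w $ j = \<i> * u $ j" "inner w p = 0"
  shows "Im (cinner u p) = 0"
proof -
  have "cinner w p = \<i> * cinner u p" unfolding cinner_def using assms(1) by (simp add: sum_distrib_left mult.assoc)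
  then have "Re (\<i> * cinner u p) = 0" using assms(2) Re_cinner[of w p] by simp
  then show ?thesis by simp
qed



lemma cond_lemma:
  fixes t t0 c \<alpha> KK \<delta>1 \<delta>2 :: real
  assumes t: "0 < t" "t \<le> t0" and cpos: "c > 0" and KK0: "KK \<ge> 0" and al: "\<alpha> > 0"
    and \<delta>: "\<delta>1 > 0" "\<delta>2 > 0"
    and t0_def: "t0 = min (min (\<delta>1 / 2) (\<delta>2 / (2 * (1 + c)))) (min (1 / (2 * (1 + c))) (\<alpha> / ((1 + c)^2 * (KK + 1))))"
  shows "t < \<delta>1" "c * t < \<delta>2" "(1 + c) * t \<le> 1" "t < 1" "c * t < 1" "0 < c * t"
      "((1 + c) * t)^2 * KK \<le> \<alpha> * t"
proof -
  have p1: "0 < 2 * (1 + c)" using cpos by simp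
  have p2: "0 < (1 + c)^2 * (KK + 1)" using cpos KK0 by simp
  have t1: "t \<le> \<delta>1 / 2" "t \<le> \<delta>2 / (2 * (1 + c))" "t \<le> 1 / (2 * (1 + c))"
      "t \<le> \<alpha> / ((1 + c)^2 * (KK + 1))"
    using t unfolding t0_def by auto
  have t2: "t * (2 * (1 + c)) \<le> \<delta>2" using t1(2) p1 by (simp only: pos_le_divide_eq)
  have t3: "t * (2 * (1 + c)) \<le> 1" using t1(3) p1 by (simp only: pos_le_divide_eq)
  have t4: "t * ((1 + c)^2 * (KK + 1)) \<le> \<alpha>" using t1(4) p2 by (simp only: pos_le_divide_eq)
  have ct: "0 < c * t" using cpos t by simp
  show "t < \<delta>1" using t1 \<delta> by linarith
  show "c * t < \<delta>2" using t2 ct t \<delta> by (simp add: algebra_simps)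
  show "(1 + c) * t \<le> 1" using t3 t by (simp add: algebra_simps)
  show "t < 1" using t3 ct by (simp add: algebra_simps)
  show "c * t < 1" using t3 ct t by (simp add: algebra_simps)
  show "0 < c * t" by (rule ct)
  have "(1 + c)^2 * KK * t \<le> (1 + c)^2 * (KK + 1) * t" using t cpos by (simp add: mult_right_mono)
  then have "(1 + c)^2 * KK * t \<le> \<alpha>" using t4 by (simp add: algebra_simps)
  then have "((1 + c)^2 * KK * t) * t \<le> \<alpha> * t" using t by (intro mult_right_mono) auto
  then show "((1 + c) * t)^2 * KK \<le> \<alpha> * t" by (simp add: power2_eq_square algebra_simps)
qed

theorem theorem2p1:
  fixes V :: "(complex ^ 'n) set" and f :: "complex \<Rightarrow> complex ^ 'n"
    and h :: "complex \<Rightarrow> complex" and L1 L2 :: complex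
  assumes "embedding_map f V"
    and "f (-1) = f 1"
    and "in_rkhs (ball 0 1) (kf f) h"
    and "((\<lambda>r. h (complex_of_real r)) \<longlongrightarrow> L1) (at_left 1)"
    and "((\<lambda>r. h (- complex_of_real r)) \<longlongrightarrow> L2) (at_left 1)"
  shows "L1 = L2"
proof -
  note emb = assms(1)[unfolded embedding_map_def]
  from emb have var: "DA_variety V" and hol: "\<And>j. (\<lambda>z. f z $ j) holomorphic_on ball 0 1"
    and Veq: "V = f ` ball 0 1"
    and bdry: "\<And>x. x \<in> cball 0 1 \<Longrightarrow> norm (f x) = 1 \<longleftrightarrow> cmod x = 1" by blast+
  from emb have "\<exists>U g. open U \<and> cball 0 1 \<subseteq> U \<and> C2_on U g \<and> (\<forall>x\<in>cball 0 1. g x = f x)"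
    by (elim conjE)
  then obtain U g where U: "open U" "cball 0 1 \<subseteq> U" and C2: "C2_on U g"
    and gf: "\<And>x. x \<in> cball 0 1 \<Longrightarrow> g x = f x" by (elim exE conjE) (simp only: ball_simps)
  have inball: "norm (f z) < 1" if z: "z \<in> ball 0 1" for z
  proof -
    from var obtain F where "(\<forall>\<phi>\<in>F. DA_multiplier \<phi>) \<and> V = {z \<in> ball 0 1. \<forall>\<phi>\<in>F. \<phi> z = 0}"
      unfolding DA_variety_def by (elim exE)
    then have "V \<subseteq> ball 0 1" by (elim conjE) (simp add: subset_iff)
    moreover have "f z \<in> V" using Veq z by simp
    ultimately have "f z \<in> ball 0 1" by blast
    then show "norm (f z) < 1" by simp
  qed
  from C2 obtain D where gD: "\<And>x. x \<in> U \<Longrightarrow> (g has_derivative D x) (at x)"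
    and C1a: "C1_on U (\<lambda>x. D x 1)" and C1b: "C1_on U (\<lambda>x. D x \<i>)"
    unfolding C2_on_def by blast
  from C1a obtain D1 where D1: "\<And>x. x \<in> U \<Longrightarrow> ((\<lambda>x. D x 1) has_derivative D1 x) (at x)"
    unfolding C1_on_def by blast
  from C1b obtain Di where Di: "\<And>x. x \<in> U \<Longrightarrow> ((\<lambda>x. D x \<i>) has_derivative Di x) (at x)"
    unfolding C1_on_def by blast
  have cont1: "continuous_on U (\<lambda>x. D x 1)"
    using D1 by (intro continuous_at_imp_continuous_on) (auto intro: has_derivative_continuous)
  have conti: "continuous_on U (\<lambda>x. D x \<i>)"
    using Di by (intro continuous_at_imp_continuous_on) (auto intro: has_derivative_continuous)
  have in1: "1 \<in> U" "-1 \<in> U" "(1::complex) \<in> cball 0 1" "(-1::complex) \<in> cball 0 1" using U by auto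
  define p where "p = f 1"
  have p1: "norm p = 1" using bdry[of 1] unfolding p_def by simp
  have gp: "g 1 = p" "g (-1) = p" using gf in1 assms(2) unfolding p_def by auto
  define u where "u = D 1 1"
  define v where "v = D (-1) 1"
  obtain \<delta>1 M1 where \<delta>1: "\<delta>1 > 0"
    and T1: "\<And>t. \<bar>t\<bar> < \<delta>1 \<Longrightarrow> norm (g (1 + of_real t) - g 1 - t *\<^sub>R D 1 1) \<le> M1 * t^2"
    using taylor1[OF U(1) in1(1) gD D1[OF in1(1)]] by blast
  obtain \<delta>2 M2 where \<delta>2: "\<delta>2 > 0"
    and T2: "\<And>t. \<bar>t\<bar> < \<delta>2 \<Longrightarrow> norm (g (-1 + of_real t) - g (-1) - t *\<^sub>R D (-1) 1) \<le> M2 * t^2"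
    using taylor1[OF U(1) in1(2) gD D1[OF in1(2)]] by blast
  define M where "M = max 0 (max M1 M2)"
  have M0: "M \<ge> 0" unfolding M_def by simp
  have T1': "norm (g (of_real (1 - t)) - (p - t *\<^sub>R u)) \<le> M * t^2" if "0 < t" "t < \<delta>1" for t
  proof -
    have "norm (g (1 + of_real (- t)) - g 1 - (- t) *\<^sub>R D 1 1) \<le> M1 * (- t)^2"
      using that by (intro T1) auto
    also have "\<dots> \<le> M * t^2" unfolding M_def by (simp add: mult_right_mono)
    finally show ?thesis using gp unfolding u_def by (simp add: algebra_simps)
  qed
  have T2': "norm (g (- of_real (1 - t)) - (p + t *\<^sub>R v)) \<le> M * t^2" if "0 < t" "t < \<delta>2" for t
  proof -
    have "norm (g (-1 + of_real t) - g (-1) - t *\<^sub>R D (-1) 1) \<le> M2 * t^2"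
      using that by (intro T2) auto
    also have "\<dots> \<le> M * t^2" unfolding M_def by (simp add: mult_right_mono)
    finally show ?thesis using gp unfolding v_def by (simp add: algebra_simps)
  qed
  have circ: "norm (g (x0 * cis \<theta>)) = 1" if "cmod x0 = 1" for x0 \<theta>
  proof -
    have "x0 * cis \<theta> \<in> cball 0 1" "cmod (x0 * cis \<theta>) = 1" using that by (auto simp: norm_mult)
    then show ?thesis using gf bdry by auto
  qed
  have Iu: "Im (cinner u p) = 0"
  proof (rule im_zero)
    show "D 1 \<i> $ j = \<i> * u $ j" for j
      unfolding u_def by (rule dir_i[OF U gD cont1 conti hol gf in1(3)])
    show "inner (D 1 \<i>) p = 0"
    proof -
      have c1: "norm (g (1 * cis \<theta>)) = 1" for \<theta> using circ[of 1] by simp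
      show ?thesis using circle_tangent[OF gD[OF in1(1)] c1] gp by simp
    qed
  qed
  have Iv: "Im (cinner v p) = 0"
  proof (rule im_zero)
    show "D (-1) \<i> $ j = \<i> * v $ j" for j
      unfolding v_def by (rule dir_i[OF U gD cont1 conti hol gf in1(4)])
    have bl: "bounded_linear (D (-1))" using gD[OF in1(2)] by (rule has_derivative_bounded_linear)
    have "D (-1) (- \<i>) = - D (-1) \<i>"
      using bl by (simp add: bounded_linear.linear linear_neg)
    then show "inner (D (-1) \<i>) p = 0"
    proof -
      have c1: "norm (g (-1 * cis \<theta>)) = 1" for \<theta> using circ[of "-1"] by simp
      show ?thesis using circle_tangent[OF gD[OF in1(2)] c1] gp \<open>D (-1) (- \<i>) = - D (-1) \<i>\<close> by simp
    qed
  qed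
  \<comment> \<open>positivity via Schwarz-Pick\<close>
  define \<phi> where "\<phi> z = cinner (f z) p" for z
  have hol\<phi>: "\<phi> holomorphic_on ball 0 1"
    unfolding \<phi>_def cinner_def by (intro holomorphic_intros hol)
  have lt\<phi>: "norm (\<phi> z) < 1" if "norm z < 1" for z
    unfolding \<phi>_def using that p1 by (intro cinner_lt1 inball) auto
  define c0 where "c0 = (1 - norm (\<phi> 0)) / (1 + norm (\<phi> 0))"
  have c0: "c0 > 0" unfolding c0_def using lt\<phi>[of 0] by (intro divide_pos_pos) (auto intro: add_pos_nonneg)
  have SP: "(1 - norm z) * c0 \<le> 1 - norm (\<phi> z) ^ 2" if "norm z < 1" for z
    unfolding c0_def by (rule schwarz_pick_bound[OF hol\<phi> lt\<phi> that])
  define \<alpha> where "\<alpha> = Re (cinner u p)"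
  define \<beta> where "\<beta> = - Re (cinner v p)"
  have pp: "cinner p p = 1" using p1 by (simp add: cinner_self)
  have \<alpha>0: "\<alpha> > 0"
  proof (rule pos_from_SP[OF _ c0 _ M0])
    show "min 1 \<delta>1 > 0" using \<delta>1 by simp
    fix t assume t: "0 < t" "t < min 1 \<delta>1"
    define z where "z = complex_of_real (1 - t)"
    define ea where "ea = g z - (p - t *\<^sub>R u)"
    have nz1: "norm z = 1 - t" unfolding z_def norm_minus_cancel norm_of_real using t by simp
    have nz: "norm z = 1 - t" "norm z < 1" using nz1 t by auto
    have fz: "f z = p - t *\<^sub>R u + ea" unfolding ea_def using gf[of z] nz by simp
    have ea: "norm ea \<le> M * t^2" unfolding ea_def z_def using T1'[of t] t by simp
    have "\<phi> z = 1 - of_real t * cinner u p + cinner ea p"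
      unfolding \<phi>_def fz by (simp add: cinner_add_left cinner_diff_left cinner_scaleR_left pp)
    then have "Re (\<phi> z) = 1 - t * \<alpha> + Re (cinner ea p)" unfolding \<alpha>_def by simp
    moreover have "- Re (cinner ea p) \<le> M * t^2"
      using cinner_cs[of ea p] p1 ea abs_Re_le_cmod[of "cinner ea p"] by simp
    ultimately have "1 - Re (\<phi> z) \<le> t * \<alpha> + M * t^2" by simp
    moreover have "1 - norm (\<phi> z) ^ 2 \<le> 2 * (1 - Re (\<phi> z))"
      using lt\<phi>[OF nz(2)] by (intro one_minus_sq_le) simp
    moreover have "t * c0 \<le> 1 - norm (\<phi> z) ^ 2" using SP[OF nz(2)] nz by simp
    ultimately show "t * c0 \<le> 2 * (t * \<alpha> + M * t^2)"
      by (meson mult_left_mono order_trans zero_le_numeral)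
  qed
  have \<beta>0: "\<beta> > 0"
  proof (rule pos_from_SP[OF _ c0 _ M0])
    show "min 1 \<delta>2 > 0" using \<delta>2 by simp
    fix t assume t: "0 < t" "t < min 1 \<delta>2"
    define z where "z = - complex_of_real (1 - t)"
    define eb where "eb = g z - (p + t *\<^sub>R v)"
    have nz1: "norm z = 1 - t" unfolding z_def norm_minus_cancel norm_of_real using t by simp
    have nz: "norm z = 1 - t" "norm z < 1" using nz1 t by auto
    have fz: "f z = p + t *\<^sub>R v + eb" unfolding eb_def using gf[of z] nz by simp
    have eb: "norm eb \<le> M * t^2" unfolding eb_def z_def using T2'[of t] t by simp
    have "\<phi> z = 1 + of_real t * cinner v p + cinner eb p"
      unfolding \<phi>_def fz by (simp add: cinner_add_left cinner_scaleR_left pp)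
    then have "Re (\<phi> z) = 1 - t * \<beta> + Re (cinner eb p)" unfolding \<beta>_def by simp
    moreover have "- Re (cinner eb p) \<le> M * t^2"
      using cinner_cs[of eb p] p1 eb abs_Re_le_cmod[of "cinner eb p"] by simp
    ultimately have "1 - Re (\<phi> z) \<le> t * \<beta> + M * t^2" by simp
    moreover have "1 - norm (\<phi> z) ^ 2 \<le> 2 * (1 - Re (\<phi> z))"
      using lt\<phi>[OF nz(2)] by (intro one_minus_sq_le) simp
    moreover have "t * c0 \<le> 1 - norm (\<phi> z) ^ 2" using SP[OF nz(2)] nz by simp
    ultimately show "t * c0 \<le> 2 * (t * \<beta> + M * t^2)"
      by (meson mult_left_mono order_trans zero_le_numeral)
  qed
  define c where "c = \<alpha> / \<beta>"
  have cpos: "c > 0" unfolding c_def using \<alpha>0 \<beta>0 by (rule divide_pos_pos)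
  define R where "R = 1 + norm u + norm v"
  define KK where "KK = R^2 + 3 * R * M"
  have KK0: "KK \<ge> 0" unfolding KK_def R_def using M0 by (intro add_nonneg_nonneg) auto
  define t0 where "t0 = min (min (\<delta>1 / 2) (\<delta>2 / (2 * (1 + c)))) (min (1 / (2 * (1 + c))) (\<alpha> / ((1 + c)^2 * (KK + 1))))"
  have t0pos: "t0 > 0" unfolding t0_def using \<delta>1 \<delta>2 cpos \<alpha>0 KK0 by auto
  define tk where "tk k = t0 * (1 / real (Suc k))" for k
  have tk: "0 < tk k" "tk k \<le> t0" for k
    unfolding tk_def using t0pos by (auto simp: field_simps)
  have tk_lim: "tk \<longlonglongrightarrow> 0"
    unfolding tk_def by (intro tendsto_mult_right_zero LIMSEQ_Suc[OF lim_inverse_n'])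
  note cond = cond_lemma[OF _ _ cpos KK0 \<alpha>0 \<delta>1 \<delta>2 t0_def]
  define r where "r k = complex_of_real (1 - tk k)" for k
  define q where "q k = - complex_of_real (1 - c * tk k)" for k
  have nr: "norm (r k) = 1 - tk k" for k
    unfolding r_def norm_of_real using cond(4)[OF tk(1)[of k] tk(2)[of k]] by simp
  have nq: "norm (q k) = 1 - c * tk k" for k
    unfolding q_def norm_minus_cancel norm_of_real using cond(5)[OF tk(1)[of k] tk(2)[of k]] by simp
  have r_in: "r k \<in> ball 0 1" for k using nr[of k] tk(1)[of k] by simp
  have q_in: "q k \<in> ball 0 1" for k using nq[of k] cond(6)[OF tk(1)[of k] tk(2)[of k]] by simp
  define Bd where "Bd = 2 * ((1 + \<alpha> / \<beta>)^2 * ((1 + norm u + norm v)^2 + 3 * (1 + norm u + norm v) * M)) / \<alpha>^2"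
  have Bd: "lcnorm2 (kf f) [(1, r k), (-1, q k)] \<le> Bd + 1" for k
  proof -
    define t where "t = tk k"
    have t: "0 < t" "t \<le> t0" unfolding t_def using tk by auto
    note cd = cond[OF t]
    define a where "a = f (r k)"
    define b where "b = f (q k)"
    define ea where "ea = g (r k) - (p - t *\<^sub>R u)"
    define eb where "eb = g (q k) - (p + (c * t) *\<^sub>R v)"
    have a_eq: "a = p - t *\<^sub>R u + ea" unfolding a_def ea_def using gf[of "r k"] r_in[of k] by simp
    have b_eq: "b = p + (c * t) *\<^sub>R v + eb" unfolding b_def eb_def using gf[of "q k"] q_in[of k] by simp
    have ea: "norm ea \<le> M * t^2" unfolding ea_def r_def t_def[symmetric] by (rule T1'[OF t(1) cd(1)])
    have eb: "norm eb \<le> M * (c * t)^2" unfolding eb_def q_def t_def[symmetric] by (rule T2'[OF cd(6) cd(2)])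
    have na: "norm a \<le> 1" unfolding a_def using inball[OF r_in[of k]] by simp
    have nb: "norm b \<le> 1" unfolding b_def using inball[OF q_in[of k]] by simp
    have "Re (1 / (1 - cinner a a) - 1 / (1 - cinner b a) - 1 / (1 - cinner a b) + 1 / (1 - cinner b b)) \<le> Bd"
      unfolding Bd_def
    proof (rule N_bound[OF p1 Iu Iv \<alpha>_def \<alpha>0 \<beta>_def \<beta>0 M0 t(1) _ _ a_eq b_eq ea eb na nb])
      show "c * t = \<alpha> * t / \<beta>" unfolding c_def by simp
      show "(1 + \<alpha> / \<beta>) * t \<le> 1" using cd(3) unfolding c_def .
      show "((1 + \<alpha> / \<beta>) * t)\<^sup>2 * ((1 + norm u + norm v)\<^sup>2 + 3 * (1 + norm u + norm v) * M) \<le> \<alpha> * t"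
        using cd(7) unfolding c_def KK_def R_def .
    qed
    moreover have "lcnorm2 (kf f) [(1, r k), (-1, q k)] =
        Re (1 / (1 - cinner a a) - 1 / (1 - cinner b a) - 1 / (1 - cinner a b) + 1 / (1 - cinner b b))"
      unfolding lcnorm2_def kf_def a_def b_def by (simp add: algebra_simps)
    ultimately show ?thesis by simp
  qed
  have "Bd \<ge> 0" unfolding Bd_def using M0
    by (intro divide_nonneg_nonneg mult_nonneg_nonneg add_nonneg_nonneg) auto
  then have Bd0: "Bd + 1 > 0" by linarith
  have gcont: "isCont g x" if "x \<in> U" for x using gD[OF that] by (rule has_derivative_continuous)
  have "(\<lambda>k. 1 - tk k) \<longlonglongrightarrow> 1 - 0" by (intro tendsto_intros tk_lim)
  then have rlim: "(\<lambda>k. 1 - tk k) \<longlonglongrightarrow> 1" by (simp only: diff_zero)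
  have "(\<lambda>k. 1 - c * tk k) \<longlonglongrightarrow> 1 - c * 0" by (intro tendsto_intros tk_lim)
  then have qlim: "(\<lambda>k. 1 - c * tk k) \<longlonglongrightarrow> 1" by (simp only: mult_zero_right diff_zero)
  have fr: "(\<lambda>k. f (r k)) \<longlonglongrightarrow> p"
  proof -
    have "(\<lambda>k. g (r k)) \<longlonglongrightarrow> g 1"
    proof (rule isCont_tendsto_compose[OF gcont[OF in1(1)]])
      show "r \<longlonglongrightarrow> 1" unfolding r_def using tendsto_of_real[OF rlim, where 'a=complex] by (simp only: of_real_1)
    qed
    moreover have "g (r k) = f (r k)" for k using gf r_in[of k] by simp
    ultimately show ?thesis using gp by simp
  qed
  have fq: "(\<lambda>k. f (q k)) \<longlonglongrightarrow> p"
  proof -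
    have "(\<lambda>k. g (q k)) \<longlonglongrightarrow> g (-1)"
    proof (rule isCont_tendsto_compose[OF gcont[OF in1(2)]])
      show "q \<longlonglongrightarrow> -1" unfolding q_def using tendsto_minus[OF tendsto_of_real[OF qlim, where 'a=complex]] by (simp only: of_real_1)
    qed
    moreover have "g (q k) = f (q k)" for k using gf q_in[of k] by simp
    ultimately show ?thesis using gp by simp
  qed
  have lim0: "(\<lambda>k. lincomb (kf f) cs (r k) - lincomb (kf f) cs (q k)) \<longlonglongrightarrow> 0"
    if cs: "snd ` set cs \<subseteq> ball 0 1" for cs
  proof -
    define \<Phi> where "\<Phi> x = (\<Sum>(a, w)\<leftarrow>cs. a * (1 / (1 - cinner x (f w))))" for x
    have lc: "lincomb (kf f) cs z = \<Phi> (f z)" for z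
      unfolding lincomb_def kf_def \<Phi>_def ..
    have conv: "(\<lambda>k. \<Phi> (X k)) \<longlonglongrightarrow> \<Phi> p" if X: "X \<longlonglongrightarrow> p" for X
      unfolding \<Phi>_def
    proof (rule tendsto_sum_list)
      fix x assume x: "x \<in> set cs"
      obtain a w where xw: "x = (a, w)" by (cases x)
      have "w \<in> ball 0 1" using cs x xw by force
      then have "cmod (cinner p (f w)) < 1"
        using cinner_cs[of p "f w"] p1 inball by fastforce
      then have nz: "1 - cinner p (f w) \<noteq> 0" by auto
      have "((\<lambda>k. a * (1 / (1 - cinner (X k) (f w)))) \<longlongrightarrow> a * (1 / (1 - cinner p (f w)))) sequentially"
        by (intro tendsto_intros tendsto_cinner_left X nz)
      then show "((\<lambda>k. case x of (a, w) \<Rightarrow> a * (1 / (1 - cinner (X k) (f w)))) \<longlongrightarrow>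
          (case x of (a, w) \<Rightarrow> a * (1 / (1 - cinner p (f w))))) sequentially"
        unfolding xw by simp
    qed
    have "(\<lambda>k. \<Phi> (f (r k)) - \<Phi> (f (q k))) \<longlonglongrightarrow> \<Phi> p - \<Phi> p"
      by (intro tendsto_diff conv fr fq)
    then show ?thesis unfolding lc by simp
  qed
  have hr: "(\<lambda>k. h (r k)) \<longlonglongrightarrow> L1"
  proof -
    have "filterlim (\<lambda>k. 1 - tk k) (at_left 1) sequentially"
      by (rule tendsto_imp_filterlim_at_left[OF rlim]) (use tk in \<open>auto intro: always_eventually\<close>)
    from filterlim_compose[OF assms(4) this] show ?thesis unfolding r_def .
  qed
  have hq: "(\<lambda>k. h (q k)) \<longlonglongrightarrow> L2"
  proof -
    have "filterlim (\<lambda>k. 1 - c * tk k) (at_left 1) sequentially"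
      by (rule tendsto_imp_filterlim_at_left[OF qlim]) (use tk cpos in \<open>auto intro: always_eventually\<close>)
    from filterlim_compose[OF assms(5) this] show ?thesis unfolding q_def .
  qed
  show ?thesis
    by (rule main_abstract[OF inball assms(3) r_in q_in Bd Bd0 lim0 hr hq])
qed

end
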